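(* Let $d\ge 2$, $n\ge 2$ and $R=\mathbb{C}[x_0,\dots,x_n]$. A tuple $(f_{ij}: 0\le i<j\le n)\in R_d^{\binom{n+1}{2}}$ is the tuple of determinantal equations of the eigenscheme of a polynomial in $R_d$, i.e. there exists $f\in R_d$ with $f_{ij}=x_i\partial_jf-x_j\partial_if$ for all $0\le i<j\le n$, if and only if $$x_if_{jk}-x_jf_{ik}+x_kf_{ij}=0\quad\text{and}\quad \partial_if_{jk}-\partial_jf_{ik}+\partial_kf_{ij}=0$$ for every $0\le i<j<k\le n$.
   Context: $\partial_i$ denotes the partial derivative $\partial/\partial x_i$. For a symmetric tensor identified with $f\in R_d$, the eigenscheme $E(f)\subseteq\mathbb{P}^n$ is defined by the $2\times 2$ minors $x_i\partial_jf-x_j\partial_if$ of $\begin{pmatrix} x_0&\dots&x_n\\ \partial_0f&\dots&\partial_nf\end{pmatrix}$, called its determinantal equations. *)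

theory Defs
  imports Complex_Main "HOL-Library.Poly_Mapping"
begin

text \<open>Polynomials in C[x_0, x_1, ...]: monomials are exponent vectors nat =>0 nat,
  a polynomial is a finitely supported map from monomials to complex coefficients.\<close>
type_synonym mpoly = "(nat \<Rightarrow>\<^sub>0 nat) \<Rightarrow>\<^sub>0 complex"

definition Var :: "nat \<Rightarrow> mpoly" where
  "Var i = Poly_Mapping.single (Poly_Mapping.single i 1) 1"

definition pdiff :: "nat \<Rightarrow> mpoly \<Rightarrow> mpoly" where
  "pdiff i p = (\<Sum>m\<in>Poly_Mapping.keys p.
     Poly_Mapping.single (m - Poly_Mapping.single i 1) (of_nat (Poly_Mapping.lookup m i) * Poly_Mapping.lookup p m))"

definition in_Rd :: "nat \<Rightarrow> nat \<Rightarrow> mpoly \<Rightarrow> bool" where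
  "in_Rd n d p \<longleftrightarrow> (\<forall>m\<in>Poly_Mapping.keys p. Poly_Mapping.keys m \<subseteq> {..n} \<and> (\<Sum>v\<in>Poly_Mapping.keys m. Poly_Mapping.lookup m v) = d)"

end

theory Submission
  imports Defs
begin


abbreviation lk :: "('a \<Rightarrow>\<^sub>0 'b::zero) \<Rightarrow> 'a \<Rightarrow> 'b" where "lk \<equiv> Poly_Mapping.lookup"
abbreviation e :: "nat \<Rightarrow> (nat \<Rightarrow>\<^sub>0 nat)" where "e i \<equiv> Poly_Mapping.single i 1"

lemma mon_add_eq_iff:
  fixes k q m :: "nat \<Rightarrow>\<^sub>0 nat"
  shows "(m = k + q) \<longleftrightarrow> (\<forall>x. lk k x \<le> lk m x) \<and> q = m - k"
  by (auto simp: poly_mapping_eq_iff fun_eq_iff lookup_add lookup_minus)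

lemma lookup_single_mult:
  fixes p :: mpoly
  shows "lk (Poly_Mapping.single k c * p) m =
     (if (\<forall>x. lk k x \<le> lk m x) then c * lk p (m - k) else 0)"
proof -
  have "lk (Poly_Mapping.single k c * p) m = (\<Sum>l. (c when k = l) * (\<Sum>q. lk p q when m = l + q))"
    by (simp add: lookup_mult lookup_single)
  also have "\<dots> = c * (\<Sum>q. lk p q when m = k + q)"
    by (simp add: when_mult)
  also have "\<dots> = c * (\<Sum>q. lk p q when (\<forall>x. lk k x \<le> lk m x) when q = m - k)"
    by (simp add: mon_add_eq_iff when_when conj_commute)
  also have "\<dots> = (if (\<forall>x. lk k x \<le> lk m x) then c * lk p (m - k) else 0)"
    by simp
  finally show ?thesis .
qed

lemma lookup_Var_mult:
  fixes p :: mpoly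
  shows "lk (Var i * p) m = (if 1 \<le> lk m i then lk p (m - e i) else 0)"
  unfolding Var_def lookup_single_mult
  by (auto simp: lookup_single when_def split: if_splits)

lemma mon_minus_e_eq:
  fixes mu m :: "nat \<Rightarrow>\<^sub>0 nat"
  assumes "1 \<le> lk mu i"
  shows "(mu - e i = m) \<longleftrightarrow> mu = m + e i"
  using assms
  by (auto simp: poly_mapping_eq_iff fun_eq_iff lookup_add lookup_minus lookup_single when_def)

lemma lookup_pdiff:
  "lk (pdiff i p) m = of_nat (lk m i + 1) * lk p (m + e i)"
proof -
  have "lk (pdiff i p) m = (\<Sum>mu\<in>Poly_Mapping.keys p. (of_nat (lk mu i) * lk p mu when mu - e i = m))"
    by (simp add: pdiff_def lookup_sum lookup_single)
  also have "\<dots> = (\<Sum>mu\<in>Poly_Mapping.keys p. (if mu = m + e i then of_nat (lk mu i) * lk p mu else 0))"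
  proof (rule sum.cong[OF refl])
    fix mu assume "mu \<in> Poly_Mapping.keys p"
    show "(of_nat (lk mu i) * lk p mu when mu - e i = m) = (if mu = m + e i then of_nat (lk mu i) * lk p mu else 0)"
    proof (cases "lk mu i = 0")
      case True
      then have "mu \<noteq> m + e i" by (auto simp: poly_mapping_eq_iff fun_eq_iff lookup_add intro!: exI[of _ i])
      then show ?thesis using True by (simp add: when_def)
    next
      case False
      then show ?thesis using mon_minus_e_eq[of mu i m] by (simp add: when_def)
    qed
  qed
  also have "\<dots> = of_nat (lk m i + 1) * lk p (m + e i)"
    by (simp add: sum.delta lookup_add in_keys_iff)
  finally show ?thesis .
qed

lemmas mon_simps = poly_mapping_eq_iff fun_eq_iff lookup_add lookup_minus lookup_single when_def

lemma pdiff_add: "pdiff i (p + q) = pdiff i p + pdiff i q"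
  by (rule poly_mapping_eqI) (simp add: lookup_pdiff lookup_add distrib_left)

lemma pdiff_diff: "pdiff i (p - q) = pdiff i p - pdiff i q"
  by (rule poly_mapping_eqI) (simp add: lookup_pdiff lookup_minus right_diff_distrib)

lemma pdiff_uminus: "pdiff i (- p) = - pdiff i p"
  by (rule poly_mapping_eqI) (simp add: lookup_pdiff)

lemma pdiff_zero[simp]: "pdiff i 0 = 0"
  by (rule poly_mapping_eqI) (simp add: lookup_pdiff)

lemma pdiff_sum: "pdiff i (\<Sum>x\<in>A. f x) = (\<Sum>x\<in>A. pdiff i (f x))"
  by (induction A rule: infinite_finite_induct) (simp_all add: pdiff_add)

lemma pdiff_Var_mult:
  "pdiff i (Var j * p) = Var j * pdiff i p + (if i = j then p else 0)"
proof (rule poly_mapping_eqI)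
  fix nu
  show "lk (pdiff i (Var j * p)) nu = lk (Var j * pdiff i p + (if i = j then p else 0)) nu"
  proof (cases "i = j")
    case True
    have a: "nu + e i - e i = nu" by (simp add: mon_simps)
    have b: "1 \<le> lk nu i \<Longrightarrow> nu - e i + e i = nu \<and> lk (nu - e i) i + 1 = lk nu i"
      by (auto simp: mon_simps)
    have l: "lk (pdiff i (Var j * p)) nu = of_nat (lk nu i + 1) * lk p nu"
      using True by (simp add: lookup_pdiff lookup_Var_mult lookup_add a)
    have r: "lk (Var j * pdiff i p) nu = of_nat (lk nu i) * lk p nu"
      using True b by (auto simp: lookup_pdiff lookup_Var_mult)
    show ?thesis using True l r by (simp add: lookup_add distrib_right)
  next
    case False
    have "1 \<le> lk nu j \<Longrightarrow> nu + e i - e j = nu - e j + e i" using False by (auto simp: mon_simps)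
    moreover have "lk (nu - e j) i = lk nu i" "lk (nu + e i) j = lk nu j" using False by (auto simp: mon_simps)
    ultimately show ?thesis using False
      by (simp add: lookup_pdiff lookup_Var_mult lookup_add)
  qed
qed

lemma pdiff_commute: "pdiff i (pdiff j p) = pdiff j (pdiff i p)"
proof (rule poly_mapping_eqI)
  fix nu
  have 1: "nu + e i + e j = nu + e j + e i" by (simp add: add_ac)
  have 2: "lk (nu + e i) j = lk nu j + (if i = j then 1 else 0)" "lk (nu + e j) i = lk nu i + (if i = j then 1 else 0)"
    by (auto simp: mon_simps)
  show "lk (pdiff i (pdiff j p)) nu = lk (pdiff j (pdiff i p)) nu"
    unfolding lookup_pdiff 1 2 by (cases "i = j") (simp_all add: mult.commute)
qed

definition Rz :: "nat \<Rightarrow> mpoly \<Rightarrow> mpoly" where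
  "Rz i p = Poly_Mapping.mapp (\<lambda>mu c. if lk mu i = 0 then c else 0) p"

lemma lookup_Rz: "lk (Rz i p) mu = (if lk mu i = 0 then lk p mu else 0)"
  by (simp add: Rz_def lookup_mapp when_def in_keys_iff)

lemma finite_shift: "finite {nu. lk p (nu + e i) \<noteq> (0::complex)}"
proof -
  have "{nu. lk p (nu + e i) \<noteq> 0} = (\<lambda>nu. nu + e i) -` Poly_Mapping.keys p"
    by (auto simp: in_keys_iff)
  moreover have "inj (\<lambda>nu::nat\<Rightarrow>\<^sub>0nat. nu + e i)" by (rule injI) simp
  ultimately show ?thesis by (simp add: finite_vimageI)
qed

definition Dv :: "nat \<Rightarrow> mpoly \<Rightarrow> mpoly" where
  "Dv i p = Abs_poly_mapping (\<lambda>nu. lk p (nu + e i))"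

lemma lookup_Dv: "lk (Dv i p) nu = lk p (nu + e i)"
  unfolding Dv_def using finite_shift by simp

lemma Dv_Var_mult[simp]: "Dv i (Var i * p) = p"
proof (rule poly_mapping_eqI)
  fix nu
  have "nu + e i - e i = nu" by (simp add: mon_simps)
  then show "lk (Dv i (Var i * p)) nu = lk p nu"
    by (simp add: lookup_Dv lookup_Var_mult lookup_add)
qed

lemma Var_cancel: "Var i * p = Var i * q \<Longrightarrow> p = q"
  by (metis Dv_Var_mult)

lemma Rz_Dv_decomp: "p = Rz i p + Var i * Dv i p"
proof (rule poly_mapping_eqI)
  fix mu
  have "1 \<le> lk mu i \<Longrightarrow> mu - e i + e i = mu" by (auto simp: mon_simps)
  then show "lk p mu = lk (Rz i p + Var i * Dv i p) mu"
    by (auto simp: lookup_add lookup_Rz lookup_Var_mult lookup_Dv)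
qed

lemma Rz_Var_mult_same[simp]: "Rz i (Var i * p) = 0"
  by (rule poly_mapping_eqI) (simp add: lookup_Rz lookup_Var_mult)

lemma Rz_Var_mult_other: "j \<noteq> i \<Longrightarrow> Rz i (Var j * p) = Var j * Rz i p"
proof (rule poly_mapping_eqI)
  fix mu assume "j \<noteq> i"
  then have "lk (mu - e j) i = lk mu i" by (auto simp: mon_simps)
  then show "lk (Rz i (Var j * p)) mu = lk (Var j * Rz i p) mu"
    by (simp add: lookup_Rz lookup_Var_mult)
qed

lemma Rz_add: "Rz i (p + q) = Rz i p + Rz i q"
  by (rule poly_mapping_eqI) (simp add: lookup_Rz lookup_add)
lemma Rz_diff: "Rz i (p - q) = Rz i p - Rz i q"
  by (rule poly_mapping_eqI) (simp add: lookup_Rz lookup_minus)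
lemma Rz_zero[simp]: "Rz i 0 = 0"
  by (rule poly_mapping_eqI) (simp add: lookup_Rz)

definition wt :: "nat \<Rightarrow> (nat \<Rightarrow>\<^sub>0 nat) \<Rightarrow> nat" where
  "wt n mu = (\<Sum>v\<le>n. lk mu v)"

lemma wt_add_e: "j \<le> n \<Longrightarrow> wt n (mu + e j) = wt n mu + 1"
  by (simp add: wt_def lookup_add sum.distrib lookup_single when_def)

lemma wt_minus_e: "j \<le> n \<Longrightarrow> 1 \<le> lk mu j \<Longrightarrow> wt n (mu - e j) + 1 = wt n mu"
proof -
  assume a: "j \<le> n" "1 \<le> lk mu j"
  then have "mu = (mu - e j) + e j" by (auto simp: mon_simps)
  then show ?thesis using wt_add_e[OF a(1), of "mu - e j"] by simp
qed

definition Wb :: "nat \<Rightarrow> nat \<Rightarrow> mpoly \<Rightarrow> bool" where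
  "Wb n m p \<longleftrightarrow> (\<forall>mu. lk p mu \<noteq> 0 \<longrightarrow> wt n mu \<le> m)"

lemma Wb_add: "Wb n m p \<Longrightarrow> Wb n m q \<Longrightarrow> Wb n m (p + q)"
  unfolding Wb_def lookup_add by (metis add.right_neutral add_0)
lemma Wb_diff: "Wb n m p \<Longrightarrow> Wb n m q \<Longrightarrow> Wb n m (p - q)"
  unfolding Wb_def lookup_minus by (metis diff_zero diff_self)
lemma Wb_uminus: "Wb n m p \<Longrightarrow> Wb n m (- p)"
  by (auto simp: Wb_def)
lemma Wb_Rz: "Wb n m p \<Longrightarrow> Wb n m (Rz i p)"
  by (auto simp: Wb_def lookup_Rz)
lemma Wb_Dv: "i \<le> n \<Longrightarrow> Wb n m p \<Longrightarrow> Wb n (m - 1) (Dv i p)"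
  unfolding Wb_def lookup_Dv
  by (metis add_diff_cancel_right' diff_le_mono wt_add_e)
lemma Wb_pdiff: "i \<le> n \<Longrightarrow> Wb n m p \<Longrightarrow> Wb n (m - 1) (pdiff i p)"
  unfolding Wb_def lookup_pdiff
  by (metis add_diff_cancel_right' diff_le_mono wt_add_e mult_zero_right)
lemma Wb0_pdiff: "i \<le> n \<Longrightarrow> Wb n 0 p \<Longrightarrow> pdiff i p = 0"
  by (rule poly_mapping_eqI) (metis Wb_def lookup_pdiff wt_add_e add_is_0 lookup_zero mult_zero_right one_neq_zero le_0_eq)

definition cyc :: "nat \<Rightarrow> (nat \<Rightarrow> nat \<Rightarrow> mpoly) \<Rightarrow> bool" where
  "cyc n W \<longleftrightarrow> (\<forall>i j k. i < j \<and> j < k \<and> k \<le> n \<longrightarrow> Var i * W j k - Var j * W i k + Var k * W i j = 0)"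

definition clo2 :: "nat \<Rightarrow> (nat \<Rightarrow> nat \<Rightarrow> mpoly) \<Rightarrow> bool" where
  "clo2 n W \<longleftrightarrow> (\<forall>i j k. i < j \<and> j < k \<and> k \<le> n \<longrightarrow> pdiff i (W j k) - pdiff j (W i k) + pdiff k (W i j) = 0)"

definition wx :: "(nat \<Rightarrow> mpoly) \<Rightarrow> nat \<Rightarrow> nat \<Rightarrow> mpoly" where
  "wx g i j = Var i * g j - Var j * g i"

definition dd :: "(nat \<Rightarrow> mpoly) \<Rightarrow> nat \<Rightarrow> nat \<Rightarrow> mpoly" where
  "dd g i j = pdiff i (g j) - pdiff j (g i)"

lemma koszul:
  assumes n2: "2 \<le> n" and cy: "cyc n F" and W: "\<forall>i j. i < j \<and> j \<le> n \<longrightarrow> Wb n m (F i j)"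
  shows "\<exists>g. (\<forall>i j. i < j \<and> j \<le> n \<longrightarrow> F i j = Var i * g j - Var j * g i) \<and> (\<forall>i\<le>n. Wb n (m - 1) (g i))"
proof -
  define u where "u j = Rz 0 (F 0 j)" for j
  have c0: "Var 0 * F j k - Var j * F 0 k + Var k * F 0 j = 0" if "0 < j" "j < k" "k \<le> n" for j k
    using cy that unfolding cyc_def by blast
  have ujk: "Var j * u k = Var k * u j" if "0 < j" "j < k" "k \<le> n" for j k
  proof -
    have "Rz 0 (Var 0 * F j k - Var j * F 0 k + Var k * F 0 j) = 0" using c0[OF that] by simp
    then have "- (Var j * u k) + Var k * u j = 0"
      using that by (simp add: Rz_add Rz_diff Rz_Var_mult_other u_def)
    then show ?thesis by (simp add: algebra_simps)
  qed
  have usym: "Var j * u k = Var k * u j" if "0 < j" "j \<le> n" "0 < k" "k \<le> n" for j k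
  proof (cases "j < k")
    case True then show ?thesis using ujk[of j k] that by simp
  next
    case False
    show ?thesis
    proof (cases "j = k")
      case True then show ?thesis by simp
    next
      case False
      then have "k < j" using \<open>\<not> j < k\<close> by simp
      then show ?thesis using ujk[of k j] that by simp
    qed
  qed
  have R1: "Rz 1 (u 1) = 0"
  proof (rule poly_mapping_eqI)
    fix mu
    have e: "Var 1 * u 2 = Var 2 * u 1" using usym[of 1 2] n2 by simp
    have "lk (u 1) mu = 0" if "lk mu 1 = 0"
    proof -
      have "lk (Var 1 * u 2) (mu + e 2) = lk (Var 2 * u 1) (mu + e 2)" using e by simp
      moreover have "lk (mu + e 2) 1 = 0" "lk (mu + e 2) 2 = lk mu 2 + 1" "mu + e 2 - e 2 = mu"
        using that by (auto simp: mon_simps)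
      ultimately show ?thesis by (simp add: lookup_Var_mult)
    qed
    then show "lk (Rz 1 (u 1)) mu = lk 0 mu" by (simp add: lookup_Rz)
  qed
  define h where "h = Dv 1 (u 1)"
  have u1: "u 1 = Var 1 * h"
    using Rz_Dv_decomp[of "u 1" 1] R1 by (simp add: h_def)
  have uj: "u j = Var j * h" if "0 < j" "j \<le> n" for j
  proof -
    have "Var 1 * u j = Var j * u 1" using usym[of 1 j] that n2 by simp
    also have "\<dots> = Var 1 * (Var j * h)" by (metis u1 mult.left_commute)
    finally show ?thesis by (rule Var_cancel)
  qed
  define g where "g j = (if j = 0 then - h else Dv 0 (F 0 j))" for j
  have F0: "F 0 j = Var 0 * g j - Var j * g 0" if "0 < j" "j \<le> n" for j
  proof -
    have "F 0 j = Rz 0 (F 0 j) + Var 0 * Dv 0 (F 0 j)" by (rule Rz_Dv_decomp)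
    then show ?thesis using uj[OF that] that by (simp add: g_def u_def add.commute)
  qed
  have Fjk: "F j k = Var j * g k - Var k * g j" if "0 < j" "j < k" "k \<le> n" for j k
  proof -
    have "Var 0 * F j k = Var j * F 0 k - Var k * F 0 j" using c0[OF that] by (simp add: algebra_simps)
    also have "\<dots> = Var 0 * (Var j * g k - Var k * g j)"
    proof -
      have a: "F 0 j = Var 0 * g j - Var j * g 0" "F 0 k = Var 0 * g k - Var k * g 0"
        using F0 that by auto
      show ?thesis unfolding a by (simp add: right_diff_distrib mult.left_commute)
    qed
    finally show ?thesis by (rule Var_cancel)
  qed
  have "\<forall>i j. i < j \<and> j \<le> n \<longrightarrow> F i j = Var i * g j - Var j * g i"
  proof (intro allI impI)
    fix i j assume a: "i < j \<and> j \<le> n"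
    show "F i j = Var i * g j - Var j * g i"
    proof (cases "i = 0")
      case True then show ?thesis using F0[of j] a by simp
    next
      case False then show ?thesis using Fjk[of i j] a by simp
    qed
  qed
  moreover have "\<forall>i\<le>n. Wb n (m - 1) (g i)"
  proof (intro allI impI)
    fix i assume "i \<le> n"
    show "Wb n (m - 1) (g i)"
    proof (cases "i = 0")
      case True
      have "Wb n m (F 0 1)" using W n2 by simp
      then have "Wb n (m - 1) (- Dv 1 (Rz 0 (F 0 1)))" using n2 by (intro Wb_uminus Wb_Dv Wb_Rz) auto
      then show ?thesis using True by (simp add: g_def h_def u_def)
    next
      case False
      then show ?thesis using W \<open>i \<le> n\<close> Wb_Dv[of 0 n m "F 0 i"] by (simp add: g_def)
    qed
  qed
  ultimately show ?thesis by blast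
qed

lemma cyc_wx: "cyc n (wx g)"
  unfolding cyc_def wx_def by (simp add: algebra_simps)

lemma pdiff_Var_mult_ne: "i \<noteq> j \<Longrightarrow> pdiff i (Var j * p) = Var j * pdiff i p"
  by (simp add: pdiff_Var_mult)

lemma clo2_wx_iff: "clo2 n (wx g) \<longleftrightarrow> cyc n (dd g)"
proof -
  have key: "pdiff i (wx g j k) - pdiff j (wx g i k) + pdiff k (wx g i j)
      = - (Var i * dd g j k - Var j * dd g i k + Var k * dd g i j)"
    if "i < j" "j < k" for i j k
    using that by (simp add: wx_def dd_def pdiff_diff pdiff_Var_mult_ne algebra_simps)
  have iff: "(pdiff i (wx g j k) - pdiff j (wx g i k) + pdiff k (wx g i j) = 0) =
       (Var i * dd g j k - Var j * dd g i k + Var k * dd g i j = 0)" if "i < j" "j < k" for i j k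
      unfolding key[OF that] by (rule neg_equal_0_iff_equal)
  show ?thesis unfolding clo2_def cyc_def using iff by blast
qed

lemma cyc_dd_grad: "cyc n (dd (\<lambda>i. pdiff i f))"
  unfolding cyc_def dd_def by (simp add: pdiff_commute)

lemma clo2_dd: "clo2 n (dd a)"
  unfolding clo2_def dd_def by (simp add: pdiff_diff pdiff_commute)

lemma cyc_cong: "(\<And>i j. i < j \<Longrightarrow> j \<le> n \<Longrightarrow> F i j = G i j) \<Longrightarrow> cyc n F \<longleftrightarrow> cyc n G"
proof -
  assume a: "\<And>i j. i < j \<Longrightarrow> j \<le> n \<Longrightarrow> F i j = G i j"
  have "F j k = G j k \<and> F i k = G i k \<and> F i j = G i j" if "i < j" "j < k" "k \<le> n" for i j k
    using a that by simp
  then show ?thesis unfolding cyc_def by (metis (no_types, lifting))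
qed

lemma clo2_cong: "(\<And>i j. i < j \<Longrightarrow> j \<le> n \<Longrightarrow> F i j = G i j) \<Longrightarrow> clo2 n F \<longleftrightarrow> clo2 n G"
proof -
  assume a: "\<And>i j. i < j \<Longrightarrow> j \<le> n \<Longrightarrow> F i j = G i j"
  have "F j k = G j k \<and> F i k = G i k \<and> F i j = G i j" if "i < j" "j < k" "k \<le> n" for i j k
    using a that by simp
  then show ?thesis unfolding clo2_def by (metis (no_types, lifting))
qed

definition Sc :: "nat \<Rightarrow> mpoly \<Rightarrow> mpoly" where
  "Sc n p = Poly_Mapping.mapp (\<lambda>mu c. c / of_nat (wt n mu)) p"

lemma lookup_Sc: "lk (Sc n p) mu = lk p mu / of_nat (wt n mu)"
  by (simp add: Sc_def lookup_mapp when_def in_keys_iff)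

lemma euler: "lk (\<Sum>i\<le>n. Var i * pdiff i p) mu = of_nat (wt n mu) * lk p mu"
proof -
  have "lk (Var i * pdiff i p) mu = of_nat (lk mu i) * lk p mu" for i
  proof (cases "1 \<le> lk mu i")
    case True
    then have "mu - e i + e i = mu" "lk (mu - e i) i + 1 = lk mu i" by (auto simp: mon_simps)
    then show ?thesis using True by (simp add: lookup_Var_mult lookup_pdiff)
  next
    case False then show ?thesis by (simp add: lookup_Var_mult)
  qed
  then show ?thesis by (simp add: lookup_sum wt_def sum_distrib_right)
qed

lemma poincare:
  assumes "\<forall>i j. i \<le> n \<and> j \<le> n \<longrightarrow> pdiff i (a j) = pdiff j (a i)"
  shows "\<exists>h. \<forall>j\<le>n. pdiff j h = a j"
proof -
  define h where "h = Sc n (\<Sum>i\<le>n. Var i * a i)"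
  have "pdiff j h = a j" if j: "j \<le> n" for j
  proof (rule poly_mapping_eqI)
    fix nu
    have "pdiff j (\<Sum>i\<le>n. Var i * a i) = (\<Sum>i\<le>n. Var i * pdiff j (a i) + (if j = i then a i else 0))"
      by (simp add: pdiff_sum pdiff_Var_mult)
    also have "\<dots> = (\<Sum>i\<le>n. Var i * pdiff i (a j)) + a j"
      using assms j by (simp add: sum.distrib)
    finally have s: "pdiff j (\<Sum>i\<le>n. Var i * a i) = (\<Sum>i\<le>n. Var i * pdiff i (a j)) + a j" .
    have "lk (pdiff j h) nu = lk (pdiff j (\<Sum>i\<le>n. Var i * a i)) nu / of_nat (wt n nu + 1)"
      unfolding h_def lookup_pdiff lookup_Sc wt_add_e[OF j] by simp
    also have "\<dots> = (of_nat (wt n nu) * lk (a j) nu + lk (a j) nu) / of_nat (wt n nu + 1)"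
      by (simp add: s lookup_add euler)
    also have "\<dots> = lk (a j) nu"
    proof -
      have nz: "(of_nat (wt n nu + 1) :: complex) \<noteq> 0" by (simp only: of_nat_eq_0_iff)
      have "(of_nat (wt n nu) * lk (a j) nu + lk (a j) nu) = of_nat (wt n nu + 1) * lk (a j) nu"
        by (simp add: distrib_right)
      then show ?thesis using nz by simp
    qed
    finally show "lk (pdiff j h) nu = lk (a j) nu" .
  qed
  then show ?thesis by blast
qed

lemma Llem:
  assumes n2: "2 \<le> n"
  shows "(\<forall>i\<le>n. Wb n m (a i)) \<Longrightarrow> cyc n (dd a) \<Longrightarrow> \<exists>h k. \<forall>i\<le>n. a i = pdiff i h + k * Var i"
proof (induction m arbitrary: a rule: less_induct)
  case (less m a)
  show ?case
  proof (cases "m = 0")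
    case True
    have "\<forall>i j. i \<le> n \<and> j \<le> n \<longrightarrow> pdiff i (a j) = pdiff j (a i)"
      using less.prems(1) True Wb0_pdiff[of _ n] by metis
    then obtain h where "\<forall>j\<le>n. pdiff j h = a j" using poincare by blast
    then have "\<forall>i\<le>n. a i = pdiff i h + 0 * Var i" by simp
    then show ?thesis by blast
  next
    case False
    have Wd: "\<forall>i j. i < j \<and> j \<le> n \<longrightarrow> Wb n (m - 1) (dd a i j)"
    proof (intro allI impI)
      fix i j assume ij: "i < j \<and> j \<le> n"
      have "Wb n (m - 1) (pdiff i (a j))" using Wb_pdiff[of i n m "a j"] less.prems(1) ij by simp
      moreover have "Wb n (m - 1) (pdiff j (a i))" using Wb_pdiff[of j n m "a i"] less.prems(1) ij by simp
      ultimately show "Wb n (m - 1) (dd a i j)" unfolding dd_def by (rule Wb_diff)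
    qed
    obtain b where b: "\<forall>i j. i < j \<and> j \<le> n \<longrightarrow> dd a i j = Var i * b j - Var j * b i"
      and Wbb: "\<forall>i\<le>n. Wb n (m - 1 - 1) (b i)"
      using koszul[OF n2 less.prems(2) Wd] by blast
    have "clo2 n (wx b)"
      using clo2_dd[of n a] clo2_cong[of n "dd a" "wx b"] b by (simp add: wx_def)
    then have cb: "cyc n (dd b)" by (simp add: clo2_wx_iff)
    have lt: "m - 1 - 1 < m" using False by simp
    obtain h' k' where hk: "\<forall>i\<le>n. b i = pdiff i h' + k' * Var i"
      using less.IH[OF lt Wbb cb] by blast
    define a' where "a' i = a i + h' * Var i" for i
    have cl: "pdiff i (a' j) = pdiff j (a' i)" if "i < j" "j \<le> n" for i j
    proof -
      have "pdiff i (a' j) - pdiff j (a' i) = dd a i j + (Var j * pdiff i h' - Var i * pdiff j h')"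
        using that by (simp add: a'_def dd_def pdiff_add mult.commute[of h'] pdiff_Var_mult_ne)
      also have "\<dots> = Var i * (b j - pdiff j h') - Var j * (b i - pdiff i h')"
        using b that by (simp add: algebra_simps)
      also have "\<dots> = 0"
        using hk that by (simp add: algebra_simps)
      finally show ?thesis by simp
    qed
    have "\<forall>i j. i \<le> n \<and> j \<le> n \<longrightarrow> pdiff i (a' j) = pdiff j (a' i)"
    proof (intro allI impI)
      fix i j assume ij: "i \<le> n \<and> j \<le> n"
      show "pdiff i (a' j) = pdiff j (a' i)"
      proof (cases "i < j")
        case True then show ?thesis using cl[of i j] ij by blast
      next
        case False
        then show ?thesis using cl[of j i] ij by (cases "i = j") auto
      qed
    qed
    then obtain h'' where h'': "\<forall>j\<le>n. pdiff j h'' = a' j" using poincare by blast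
    have "\<forall>i\<le>n. a i = pdiff i h'' + (- h') * Var i"
      using h'' by (simp add: a'_def)
    then show ?thesis by blast
  qed
qed

definition qd :: "nat \<Rightarrow> nat \<Rightarrow> (nat \<Rightarrow>\<^sub>0 nat) \<Rightarrow> bool" where
  "qd n d mu \<longleftrightarrow> Poly_Mapping.keys mu \<subseteq> {..n} \<and> (\<Sum>v\<in>Poly_Mapping.keys mu. lk mu v) = d"

lemma qd_iff: "qd n d mu \<longleftrightarrow> (\<forall>v. n < v \<longrightarrow> lk mu v = 0) \<and> wt n mu = d"
proof -
  have k: "Poly_Mapping.keys mu \<subseteq> {..n} \<longleftrightarrow> (\<forall>v. n < v \<longrightarrow> lk mu v = 0)"
    unfolding subset_iff atMost_iff in_keys_iff by (meson not_le)
  have "(\<Sum>v\<in>Poly_Mapping.keys mu. lk mu v) = wt n mu" if "Poly_Mapping.keys mu \<subseteq> {..n}"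
    unfolding wt_def using that by (intro sum.mono_neutral_left) (auto simp: in_keys_iff)
  then show ?thesis using k unfolding qd_def by auto
qed

definition Pd :: "nat \<Rightarrow> nat \<Rightarrow> mpoly \<Rightarrow> mpoly" where
  "Pd n d p = Poly_Mapping.mapp (\<lambda>mu c. if qd n d mu then c else 0) p"

lemma lookup_Pd: "lk (Pd n d p) mu = (if qd n d mu then lk p mu else 0)"
  by (simp add: Pd_def lookup_mapp when_def in_keys_iff)

lemma in_Rd_Pd: "in_Rd n d (Pd n d p)"
  unfolding in_Rd_def by (metis (mono_tags, lifting) in_keys_iff lookup_Pd qd_def)

lemma Pd_id: "in_Rd n d p \<Longrightarrow> Pd n d p = p"
  by (rule poly_mapping_eqI) (auto simp: lookup_Pd in_Rd_def qd_def in_keys_iff)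

lemma in_Rd_Wb: "in_Rd n d p \<Longrightarrow> Wb n d p"
  unfolding in_Rd_def Wb_def using qd_iff qd_def in_keys_iff by (metis order_refl)

lemma Pd_diff: "Pd n d (p - q) = Pd n d p - Pd n d q"
  by (rule poly_mapping_eqI) (simp add: lookup_Pd lookup_minus)

lemma Pd_Var_pdiff:
  assumes "i \<le> n" "j \<le> n"
  shows "Pd n d (Var i * pdiff j h) = Var i * pdiff j (Pd n d h)"
proof (rule poly_mapping_eqI)
  fix mu
  have q: "qd n d mu \<longleftrightarrow> qd n d (mu - e i + e j)" if "1 \<le> lk mu i"
  proof -
    have "\<forall>v. n < v \<longrightarrow> lk (mu - e i + e j) v = lk mu v"
      using assms by (auto simp: mon_simps)
    moreover have "wt n (mu - e i + e j) = wt n mu"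
      using wt_add_e[OF assms(2), of "mu - e i"] wt_minus_e[OF assms(1) that] by simp
    ultimately show ?thesis unfolding qd_iff by auto
  qed
  show "lk (Pd n d (Var i * pdiff j h)) mu = lk (Var i * pdiff j (Pd n d h)) mu"
    using q by (simp add: lookup_Pd lookup_Var_mult lookup_pdiff)
qed

theorem main:
  fixes d n :: nat and F :: "nat \<Rightarrow> nat \<Rightarrow> mpoly"
  assumes "d \<ge> 2" and "n \<ge> 2"
    and "\<And>i j. i < j \<Longrightarrow> j \<le> n \<Longrightarrow> in_Rd n d (F i j)"
  shows "(\<exists>f. in_Rd n d f \<and>
            (\<forall>i j. i < j \<and> j \<le> n \<longrightarrow> F i j = Var i * pdiff j f - Var j * pdiff i f))
     \<longleftrightarrow> (\<forall>i j k. i < j \<and> j < k \<and> k \<le> n \<longrightarrow>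
            Var i * F j k - Var j * F i k + Var k * F i j = 0 \<and>
            pdiff i (F j k) - pdiff j (F i k) + pdiff k (F i j) = 0)"
    (is "?L \<longleftrightarrow> ?R")
proof -
  have R: "?R \<longleftrightarrow> cyc n F \<and> clo2 n F" unfolding cyc_def clo2_def by blast
  show ?thesis
  proof
    assume ?L
    then obtain f where f: "\<forall>i j. i < j \<and> j \<le> n \<longrightarrow> F i j = Var i * pdiff j f - Var j * pdiff i f"
      by blast
    have eq: "\<And>i j. i < j \<Longrightarrow> j \<le> n \<Longrightarrow> F i j = wx (\<lambda>i. pdiff i f) i j"
      using f by (simp add: wx_def)
    have "cyc n F" using cyc_cong[of n F "wx (\<lambda>i. pdiff i f)"] eq cyc_wx by blast
    moreover have "clo2 n F" using clo2_cong[of n F "wx (\<lambda>i. pdiff i f)"] eq clo2_wx_iff cyc_dd_grad by blast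
    ultimately show ?R using R by blast
  next
    assume ?R
    then have cF: "cyc n F" and lF: "clo2 n F" using R by auto
    have W: "\<forall>i j. i < j \<and> j \<le> n \<longrightarrow> Wb n d (F i j)" using assms(3) in_Rd_Wb by blast
    obtain g where g: "\<forall>i j. i < j \<and> j \<le> n \<longrightarrow> F i j = Var i * g j - Var j * g i"
      and Wg: "\<forall>i\<le>n. Wb n (d - 1) (g i)"
      using koszul[OF assms(2) cF W] by blast
    have eq: "\<And>i j. i < j \<Longrightarrow> j \<le> n \<Longrightarrow> F i j = wx g i j"
      using g by (simp add: wx_def)
    have "clo2 n (wx g)" using clo2_cong[of n F "wx g"] eq lF by blast
    then have "cyc n (dd g)" by (simp add: clo2_wx_iff)
    then obtain h k where hk: "\<forall>i\<le>n. g i = pdiff i h + k * Var i"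
      using Llem[OF assms(2) Wg] by blast
    define f where "f = Pd n d h"
    have "F i j = Var i * pdiff j f - Var j * pdiff i f" if ij: "i < j" "j \<le> n" for i j
    proof -
      have "F i j = Var i * pdiff j h - Var j * pdiff i h"
        using g hk ij by (simp add: algebra_simps)
      then have "F i j = Pd n d (Var i * pdiff j h - Var j * pdiff i h)"
        using Pd_id assms(3)[OF ij] by metis
      also have "\<dots> = Var i * pdiff j f - Var j * pdiff i f"
        using ij by (simp add: Pd_diff Pd_Var_pdiff f_def)
      finally show ?thesis .
    qed
    then show ?L using in_Rd_Pd f_def by blast
  qed
qed


theorem theorem3p3:
  fixes d n :: nat and F :: "nat \<Rightarrow> nat \<Rightarrow> mpoly"
  assumes "d \<ge> 2" and "n \<ge> 2"
    and "\<And>i j. i < j \<Longrightarrow> j \<le> n \<Longrightarrow> in_Rd n d (F i j)"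
  shows "(\<exists>f. in_Rd n d f \<and>
            (\<forall>i j. i < j \<and> j \<le> n \<longrightarrow> F i j = Var i * pdiff j f - Var j * pdiff i f))
     \<longleftrightarrow> (\<forall>i j k. i < j \<and> j < k \<and> k \<le> n \<longrightarrow>
            Var i * F j k - Var j * F i k + Var k * F i j = 0 \<and>
            pdiff i (F j k) - pdiff j (F i k) + pdiff k (F i j) = 0)"
  using main[OF assms] .

end
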